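(* There is an absolute constant $K>0$ such that the following holds. Let $U \geqslant 2$ and $n\geqslant 2$ be integers. Let $A, B, X \subseteq [U]$ with $|A|=|B|=n$ and $X$ nonempty. Then there exists a set $M$ of integers with the following properties: - $|M| \leqslant 1 + \log_2 |X|$; - $M \subseteq [n^{1.5}, 8n^{1.5})$; - for every $x \in X$ there exists $m \in M$ with \[\#\{(a,b) \in A \times B : a+b \equiv x \pmod m \ \text{and}\ a+b \neq x\} \leqslant K\sqrt n\,(\log U)^3.\]
   Context: $[U] := \{0,1,\ldots,U-1\}$; $[x,y)$ for reals denotes the half-open real interval. *)

theory Defs
  imports "HOL-Analysis.Analysis" "HOL-Number_Theory.Cong"
begin

end

theory Submission
  imports Defs "HOL-Computational_Algebra.Primes" "HOL-Real_Asymp.Real_Asymp"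
begin



lemma suc_div_split:
  fixes n d :: nat assumes "d > 0"
  shows "Suc n div d = n div d + (if d dvd Suc n then 1 else 0)"
  using assms by (simp add: div_Suc mod_eq_0_iff_dvd)




lemma mult_le_self: "prime (p::nat) \<Longrightarrow> m > 0 \<Longrightarrow> multiplicity p m \<le> m"
proof -
  assume p: "prime p" and m: "m > 0"
  have "p ^ multiplicity p m dvd m" by (rule multiplicity_dvd)
  hence "p ^ multiplicity p m \<le> m" using m by (simp add: dvd_imp_le)
  moreover have "multiplicity p m < p ^ multiplicity p m"
  proof -
    have "multiplicity p m < 2 ^ multiplicity p m" by (rule less_exp)
    also have "\<dots> \<le> p ^ multiplicity p m" using prime_ge_2_nat[OF p] by (intro power_mono) auto
    finally show ?thesis .
  qed
  ultimately show ?thesis by linarith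
qed

lemma sum_ind_card: "finite A \<Longrightarrow> (\<Sum>k\<in>A. if P k then 1 else 0::nat) = card {k\<in>A. P k}"
  by (simp add: sum.inter_filter[symmetric])

lemma legendre:
  assumes p: "prime (p::nat)"
  shows "multiplicity p (fact n :: nat) = (\<Sum>k\<in>{1..n}. n div p ^ k)"
proof (induction n)
  case 0 then show ?case by simp
next
  case (Suc n)
  have p1: "p > 1" using p prime_gt_1_nat by blast
  have "multiplicity p (fact (Suc n) :: nat) = multiplicity p (Suc n * fact n)"
    by (simp add: fact_Suc)
  also have "\<dots> = multiplicity p (Suc n) + multiplicity p (fact n :: nat)"
    using p by (intro prime_elem_multiplicity_mult_distrib) auto
  finally have e1: "multiplicity p (fact (Suc n) :: nat) = multiplicity p (Suc n) + (\<Sum>k\<in>{1..n}. n div p ^ k)"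
    using Suc by simp
  have "(\<Sum>k\<in>{1..Suc n}. Suc n div p ^ k) = (\<Sum>k\<in>{1..Suc n}. n div p ^ k + (if p^k dvd Suc n then 1 else 0))"
    using p1 by (intro sum.cong refl suc_div_split) simp
  also have "\<dots> = (\<Sum>k\<in>{1..Suc n}. n div p ^ k) + (\<Sum>k\<in>{1..Suc n}. (if p^k dvd Suc n then 1 else 0))"
    by (rule sum.distrib)
  also have "(\<Sum>k\<in>{1..Suc n}. n div p ^ k) = (\<Sum>k\<in>{1..n}. n div p ^ k) + n div p ^ Suc n"
    by simp
  also have "n div p ^ Suc n = 0"
  proof -
    have "n < 2 ^ n" by (rule less_exp)
    also have "\<dots> \<le> p ^ n" using p1 by (intro power_mono) auto
    also have "\<dots> \<le> p ^ Suc n" using p1 by simp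
    finally show ?thesis by simp
  qed
  also have "(\<Sum>k\<in>{1..Suc n}. (if p^k dvd Suc n then 1 else 0::nat)) = card {k\<in>{1..Suc n}. p^k dvd Suc n}"
    by (rule sum_ind_card) simp
  also have "{k\<in>{1..Suc n}. p^k dvd Suc n} = {1..multiplicity p (Suc n)}"
  proof -
    have "multiplicity p (Suc n) \<le> Suc n" using mult_le_self[OF p] by simp
    moreover have B: "\<And>k. p^k dvd Suc n \<longleftrightarrow> k \<le> multiplicity p (Suc n)"
      by (rule power_dvd_iff_le_multiplicity) (use p1 in simp_all)
    ultimately show ?thesis
    proof (intro set_eqI)
      fix k
      have "p^k dvd Suc n \<longleftrightarrow> k \<le> multiplicity p (Suc n)" by (rule B)
      then show "k \<in> {k\<in>{1..Suc n}. p^k dvd Suc n} \<longleftrightarrow> k \<in> {1..multiplicity p (Suc n)}"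
        using \<open>multiplicity p (Suc n) \<le> Suc n\<close> by (simp only: mem_Collect_eq atLeastAtMost_iff) linarith
    qed
  qed
  finally show ?case using e1 by simp
qed




lemma div_double_eq:
  fixes N d :: nat assumes "d > 0"
  shows "(2*N) div d = 2 * (N div d) + (2 * (N mod d)) div d" "(2 * (N mod d)) div d \<le> 1"
proof -
  have "2*N = d * (2 * (N div d)) + 2 * (N mod d)"
    by (metis (no_types, lifting) add.commute distrib_left_numeral mod_mult_div_eq mult.left_commute)
  then show "(2*N) div d = 2 * (N div d) + (2 * (N mod d)) div d"
    using div_mult1_eq by blast
  have "2 * (N mod d) < 2 * d" using assms by simp
  hence "(2 * (N mod d)) div d < 2" using assms
    by (simp add: div_less_iff_less_mult mult.commute)
  thus "(2 * (N mod d)) div d \<le> 1" by simp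
qed

lemma div_double_bounds:
  fixes N d :: nat assumes "d > 0"
  shows "2 * (N div d) \<le> (2*N) div d" "(2*N) div d \<le> 2 * (N div d) + 1"
  using div_double_eq[OF assms, of N] by linarith+

lemma fact_mult_ext:
  assumes p: "prime (p::nat)" and "N \<le> M"
  shows "multiplicity p (fact N :: nat) = (\<Sum>k\<in>{1..M}. N div p ^ k)"
proof -
  have p1: "p > 1" using p prime_gt_1_nat by blast
  have "(\<Sum>k\<in>{1..M}. N div p ^ k) = (\<Sum>k\<in>{1..N}. N div p ^ k) + (\<Sum>k\<in>{N<..M}. N div p ^ k)"
  proof -
    have "{1..M} = {1..N} \<union> {N<..M}" using assms(2) by auto
    moreover have "(\<Sum>k\<in>{1..N} \<union> {N<..M}. N div p ^ k) = (\<Sum>k\<in>{1..N}. N div p ^ k) + (\<Sum>k\<in>{N<..M}. N div p ^ k)"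
      by (rule sum.union_disjoint) auto
    ultimately show ?thesis by simp
  qed
  also have "(\<Sum>k\<in>{N<..M}. N div p ^ k) = 0"
  proof (intro sum.neutral ballI)
    fix k assume "k \<in> {N<..M}"
    hence "N < k" by simp
    also have "k < 2 ^ k" by (rule less_exp)
    also have "\<dots> \<le> p ^ k" using p1 by (intro power_mono) auto
    finally show "N div p ^ k = 0" by simp
  qed
  finally show ?thesis using legendre[OF p] by simp
qed

lemma binom_mult_bound:
  assumes p: "prime (p::nat)" and N: "N \<ge> 1"
  shows "p ^ multiplicity p ((2*N) choose N) \<le> 2*N"
proof (rule ccontr)
  assume H: "\<not> ?thesis"
  define v where "v = multiplicity p ((2*N) choose N)"
  have p1: "p > 1" using p prime_gt_1_nat by blast
  have big: "p ^ v > 2*N" using H v_def by simp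
  have "fact N * fact (2*N - N) * ((2*N) choose N) = (fact (2*N) :: nat)"
    by (rule binomial_fact_lemma) simp
  hence eq: "fact (2*N) = ((2*N) choose N) * fact N * (fact N :: nat)" by (simp add: algebra_simps)
  have Cpos: "((2*N) choose N) > 0" by simp
  have "multiplicity p (fact (2*N) :: nat) = v + multiplicity p (fact N :: nat) + multiplicity p (fact N :: nat)"
    unfolding eq v_def using p Cpos
    by (simp add: prime_elem_multiplicity_mult_distrib)
  hence ve: "(\<Sum>k\<in>{1..2*N}. (2*N) div p ^ k) = v + 2 * (\<Sum>k\<in>{1..2*N}. N div p ^ k)"
    using fact_mult_ext[OF p, of "2*N" "2*N"] fact_mult_ext[OF p, of N "2*N"] by simp
  have "v = (\<Sum>k\<in>{1..2*N}. (2*N) div p ^ k) - (\<Sum>k\<in>{1..2*N}. 2 * (N div p ^ k))"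
    using ve by (simp add: sum_distrib_left)
  also have "\<dots> = (\<Sum>k\<in>{1..2*N}. (2*N) div p ^ k - 2 * (N div p ^ k))"
    by (rule sum_subtractf_nat[symmetric]) (use div_double_bounds p1 in auto)
  also have "\<dots> \<le> (\<Sum>k\<in>{1..2*N}. if k < v then 1 else 0)"
  proof (intro sum_mono)
    fix k assume k: "k \<in> {1..2*N}"
    show "(2*N) div p ^ k - 2 * (N div p ^ k) \<le> (if k < v then 1 else 0)"
    proof (cases "k < v")
      case True then show ?thesis using div_double_bounds[of "p^k" N] p1 by simp
    next
      case False
      hence "p ^ v \<le> p ^ k" using p1 by (intro power_increasing) auto
      hence "2*N < p^k" using big by linarith
      then show ?thesis using False by simp
    qed
  qed
  also have "\<dots> = card {k\<in>{1..2*N}. k < v}" by (rule sum_ind_card) simp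
  also have "\<dots> \<le> card {1..<v}" by (intro card_mono) auto
  finally have "v \<le> v - 1" by simp
  moreover have "v \<ge> 1" using big N by (cases v) auto
  ultimately show False by simp
qed




lemma prod_primes_dvd:
  fixes x :: "'a :: factorial_semiring_gcd"
  assumes "finite T" "\<And>p. p \<in> T \<Longrightarrow> prime p \<and> p dvd x"
  shows "\<Prod>T dvd x"
  using assms
proof (induction T rule: finite_induct)
  case empty then show ?case by simp
next
  case (insert p T)
  have pp: "prime p" "p dvd x" using insert by auto
  have "\<not> p dvd \<Prod>T"
  proof
    assume "p dvd \<Prod>T"
    then obtain q where "q \<in> T" "p dvd q" using prime_dvd_prod_iff[OF insert(1) pp(1), of id] by auto
    moreover have "prime q" using insert \<open>q \<in> T\<close> by auto
    ultimately have "p = q" using pp primes_dvd_imp_eq by blast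
    thus False using insert \<open>q \<in> T\<close> by auto
  qed
  hence "coprime p (\<Prod>T)" using pp prime_imp_coprime by blast
  moreover have "\<Prod>T dvd x" using insert by auto
  ultimately show ?case using insert pp by (simp add: divides_mult)
qed

lemma primorial_bound: "(\<Prod>{p::nat. prime p \<and> p \<le> n}) \<le> 4 ^ n"
proof (induction n rule: less_induct)
  case (less n)
  show ?case
  proof (cases "n \<le> 2")
    case True
    then have "n = 0 \<or> n = 1 \<or> n = 2" by auto
    moreover have e0: "{p::nat. prime p \<and> p \<le> 0} = {}" "{p::nat. prime p \<and> p \<le> 1} = {}"
      by (auto dest: prime_gt_1_nat)
    moreover have e2: "{p::nat. prime p \<and> p \<le> 2} = {2}"
      using prime_ge_2_nat by (auto intro: antisym)
    ultimately show ?thesis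
    proof (elim disjE)
      assume n0: "n = 0" show ?thesis by (simp only: n0 e0(1) prod.empty) simp
    next
      assume n0: "n = 1" show ?thesis by (simp only: n0 e0(2) prod.empty) simp
    next
      assume "n = 2" then show ?thesis using e2 by simp
    qed
  next
    case False
    show ?thesis
    proof (cases "even n")
      case True
      hence "\<not> prime n" using False prime_odd_nat by auto
      hence "{p::nat. prime p \<and> p \<le> n} = {p. prime p \<and> p \<le> n - 1}"
        using le_eq_less_or_eq by auto
      moreover have "(\<Prod>{p::nat. prime p \<and> p \<le> n - 1}) \<le> 4 ^ (n-1)"
        using less False by simp
      moreover have "(4::nat) ^ (n-1) \<le> 4 ^ n" by (intro power_increasing) auto
      ultimately show ?thesis by (metis order_trans)
    next
      case odd: False
      then obtain m where m: "n = 2*m+1" using oddE by blast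
      have m1: "m \<ge> 1" using m False by simp
      define S1 where "S1 = {p::nat. prime p \<and> p \<le> m+1}"
      define S2 where "S2 = {p::nat. prime p \<and> m+1 < p \<and> p \<le> n}"
      have fin: "finite S1" "finite S2" unfolding S1_def S2_def by auto
      have split: "{p::nat. prime p \<and> p \<le> n} = S1 \<union> S2" "S1 \<inter> S2 = {}"
        unfolding S1_def S2_def using m by auto
      have "\<Prod>{p::nat. prime p \<and> p \<le> n} = \<Prod>S1 * \<Prod>S2"
        unfolding split(1) using fin split(2) by (simp add: prod.union_disjoint)
      moreover have "\<Prod>S1 \<le> 4 ^ (m+1)" unfolding S1_def using less[of "m+1"] m m1 by linarith
      moreover have "\<Prod>S2 \<le> 4 ^ m"
      proof -
        define B where "B = n choose m"
        have Bf: "fact m * fact (n - m) * B = (fact n :: nat)"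
          unfolding B_def by (rule binomial_fact_lemma) (simp add: m)
        have "\<Prod>S2 dvd B"
        proof (rule prod_primes_dvd[OF fin(2)])
          fix p assume "p \<in> S2"
          hence p: "prime p" "m+1 < p" "p \<le> n" unfolding S2_def by auto
          have "p dvd fact m * fact (n - m) * B"
            unfolding Bf using p prime_dvd_fact_iff by blast
          moreover have "\<not> p dvd fact m" using p prime_dvd_fact_iff[of p m] by simp
          moreover have "\<not> p dvd fact (n - m)" using p prime_dvd_fact_iff[of p "n - m"] m by simp
          ultimately have "p dvd B" using p by (simp add: prime_dvd_mult_iff)
          thus "prime p \<and> p dvd B" using p by simp
        qed
        hence S2B: "\<Prod>S2 \<le> B" by (rule dvd_imp_le) (simp add: B_def m)
        have "2 * B \<le> 2 ^ n"
        proof -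
          have "n choose m = n choose (n - m)" by (rule binomial_symmetric) (simp add: m)
          moreover have "n - m = m + 1" using m by simp
          ultimately have "B = n choose (m+1)" unfolding B_def by simp
          hence "2 * B = (n choose m) + (n choose (m+1))" by (simp add: B_def)
          also have "\<dots> \<le> (\<Sum>k\<le>n. n choose k)"
          proof -
            have "(\<Sum>k\<in>{m, m+1}. n choose k) \<le> (\<Sum>k\<le>n. n choose k)"
              by (intro sum_mono2) (auto simp: m)
            thus ?thesis by simp
          qed
          also have "\<dots> = 2 ^ n" by (rule choose_row_sum)
          finally show ?thesis .
        qed
        moreover have "(2::nat) ^ n = 2 * 4 ^ m" using m by (simp add: power_mult)
        ultimately show ?thesis using S2B by linarith
      qed
      ultimately have "\<Prod>{p::nat. prime p \<and> p \<le> n} \<le> 4 ^ (m+1) * 4 ^ m"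
        by (metis mult_le_mono)
      also have "\<dots> = 4 ^ n" using m by (simp add: power_add[symmetric])
      finally show ?thesis .
    qed
  qed
qed




lemma prime_count_bound:
  fixes Q r :: nat assumes Q1: "Q \<ge> 1" and r: "6*Q < r*r"
  shows "4^(3*Q) \<le> (6*Q) * ((6*Q)^r * 4^Q) * (6*Q)^(card {p. prime p \<and> Q \<le> p \<and> p \<le> 6*Q})"
proof -
  define N where "N = 3*Q"
  have N1: "N \<ge> 1" using Q1 N_def by simp
  have N6: "2*N = 6*Q" using N_def by simp
  define C where "C = (2*N) choose N"
  have Cpos: "C > 0" unfolding C_def by simp
  define v where "v p = multiplicity p C" for p
  define Pr where "Pr = {p::nat. prime p \<and> p \<le> 6*Q}"
  define Pr1 where "Pr1 = {p::nat. prime p \<and> p < Q}"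
  define S where "S = {p::nat. prime p \<and> Q \<le> p \<and> p \<le> 6*Q}"
  have finPr: "finite Pr" "finite Pr1" "finite S" unfolding Pr_def Pr1_def S_def by auto
  have lower: "4^(3*Q) \<le> 6*Q*C"
  proof -
    have "4^N / (2*real N) \<le> real ((2*N) choose N)"
      using N1 by (intro central_binomial_lower_bound) simp
    hence "4^N \<le> real ((2*N) choose N) * (2*real N)" using N1 by (simp add: field_simps)
    hence "real (4^N) \<le> real (2*N*C)" unfolding C_def by (simp add: algebra_simps)
    hence "4^N \<le> 2*N*C" by linarith
    thus ?thesis using N_def N6 by simp
  qed
  have Cdvd: "C dvd fact (2*N)"
  proof -
    have "fact N * fact (2*N - N) * ((2*N) choose N) = (fact (2*N) :: nat)"
      by (rule binomial_fact_lemma) simp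
    thus ?thesis unfolding C_def by (metis dvd_triv_right)
  qed
  have sub: "prime_factors C \<subseteq> Pr"
  proof
    fix p assume "p \<in> prime_factors C"
    hence "prime p" "p dvd C" by (auto simp: in_prime_factors_iff)
    hence "p dvd fact (2*N)" using Cdvd dvd_trans by blast
    hence "p \<le> 2*N" using prime_dvd_fact_iff \<open>prime p\<close> by blast
    thus "p \<in> Pr" using \<open>prime p\<close> N6 unfolding Pr_def by simp
  qed
  have "C = (\<Prod>p \<in> prime_factors C. p ^ v p)"
    unfolding v_def using Cpos by (rule prime_factorization_nat)
  also have "\<dots> = (\<Prod>p \<in> Pr. p ^ v p)"
  proof (rule prod.mono_neutral_left[OF finPr(1) sub])
    show "\<forall>i\<in>Pr - prime_factors C. i ^ v i = 1"
    proof
      fix p assume "p \<in> Pr - prime_factors C"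
      hence "prime p" "p \<notin> prime_factors C" unfolding Pr_def by auto
      hence "\<not> p dvd C" using Cpos by (auto simp: in_prime_factors_iff)
      hence "v p = 0" unfolding v_def by (simp add: not_dvd_imp_multiplicity_0)
      thus "p ^ v p = 1" by simp
    qed
  qed
  also have "Pr = Pr1 \<union> S" unfolding Pr_def Pr1_def S_def by auto
  also have "(\<Prod>p \<in> Pr1 \<union> S. p ^ v p) = (\<Prod>p \<in> Pr1. p ^ v p) * (\<Prod>p \<in> S. p ^ v p)"
    by (rule prod.union_disjoint) (use finPr in \<open>auto simp: Pr1_def S_def\<close>)
  finally have Ceq: "C = (\<Prod>p \<in> Pr1. p ^ v p) * (\<Prod>p \<in> S. p ^ v p)" .
  have bnd: "p ^ v p \<le> 6*Q" if "prime p" for p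
    using binom_mult_bound[OF that N1] N6 unfolding v_def C_def by simp
  have S_bound: "(\<Prod>p \<in> S. p ^ v p) \<le> (6*Q)^(card S)"
  proof -
    have "(\<Prod>p \<in> S. p ^ v p) \<le> (\<Prod>p \<in> S. 6*Q)"
      by (rule prod_mono) (use bnd in \<open>auto simp: S_def\<close>)
    thus ?thesis by simp
  qed
  define g where "g p = (if p*p \<le> 6*Q then 6*Q else 1)" for p :: nat
  have Pr1_bound: "(\<Prod>p \<in> Pr1. p ^ v p) \<le> (6*Q)^r * 4^Q"
  proof -
    have "(\<Prod>p \<in> Pr1. p ^ v p) \<le> (\<Prod>p \<in> Pr1. g p * p)"
    proof (rule prod_mono)
      fix p assume "p \<in> Pr1"
      hence pp: "prime p" unfolding Pr1_def by simp
      have p1: "p > 1" using pp prime_gt_1_nat by blast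
      show "0 \<le> p ^ v p \<and> p ^ v p \<le> g p * p"
      proof (cases "p*p \<le> 6*Q")
        case True
        have "p ^ v p \<le> 6*Q" by (rule bnd[OF pp])
        also have "\<dots> \<le> 6*Q*p" using p1 by simp
        finally show ?thesis using True g_def by simp
      next
        case False
        have "v p \<le> 1"
        proof (rule ccontr)
          assume "\<not> v p \<le> 1"
          hence "p^2 \<le> p ^ v p" using p1 by (intro power_increasing) auto
          hence "p*p \<le> 6*Q" using bnd[OF pp] by (simp add: power2_eq_square)
          thus False using False by simp
        qed
        hence "p ^ v p \<le> p ^ 1" using p1 by (intro power_increasing) auto
        thus ?thesis using False g_def by simp
      qed
    qed
    also have "\<dots> = (\<Prod>p \<in> Pr1. g p) * (\<Prod>p \<in> Pr1. p)" by (rule prod.distrib)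
    also have "(\<Prod>p \<in> Pr1. g p) \<le> (6*Q)^r"
    proof -
      have "(\<Prod>p \<in> Pr1. g p) = (\<Prod>p \<in> {p\<in>Pr1. p*p \<le> 6*Q}. 6*Q)"
        unfolding g_def by (rule prod.inter_filter[symmetric]) (rule finPr)
      also have "\<dots> = (6*Q) ^ card {p\<in>Pr1. p*p \<le> 6*Q}" by simp
      also have "card {p\<in>Pr1. p*p \<le> 6*Q} \<le> card {..<r}"
      proof (rule card_mono)
        show "{p \<in> Pr1. p * p \<le> 6 * Q} \<subseteq> {..<r}"
        proof
          fix p assume "p \<in> {p \<in> Pr1. p * p \<le> 6 * Q}"
          hence "p*p < r*r" using r by simp
          hence "p < r" by (metis mult_le_mono not_less)
          thus "p \<in> {..<r}" by simp
        qed
      qed simp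
      hence "(6*Q) ^ card {p\<in>Pr1. p*p \<le> 6*Q} \<le> (6*Q)^r" using Q1 by (intro power_increasing) auto
      finally show ?thesis .
    qed
    also have "(\<Prod>p \<in> Pr1. p) \<le> 4^Q"
    proof -
      have "(\<Prod>p \<in> Pr1. p) dvd \<Prod>{p::nat. prime p \<and> p \<le> Q}"
        by (rule prod_dvd_prod_subset) (auto simp: Pr1_def)
      hence "(\<Prod>p \<in> Pr1. p) \<le> \<Prod>{p::nat. prime p \<and> p \<le> Q}"
        by (rule dvd_imp_le) (auto intro: prime_gt_0_nat)
      also have "\<dots> \<le> 4^Q" by (rule primorial_bound)
      finally show ?thesis .
    qed
    finally show ?thesis by (simp add: mult_mono)
  qed
  have "6*Q*C \<le> 6*Q * (((6*Q)^r * 4^Q) * (6*Q)^(card S))"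
    unfolding Ceq by (intro mult_le_mono2 mult_le_mono Pr1_bound S_bound)
  with lower have "4^(3*Q) \<le> 6*Q * (((6*Q)^r * 4^Q) * (6*Q)^(card S))" by (rule order_trans)
  thus ?thesis unfolding S_def by (simp only: mult.assoc)
qed




lemma asym1: "eventually (\<lambda>x::real. x + (sqrt (6*x) + 2) * ln (6*x) \<le> 2*x) at_top"
  by real_asymp

lemma prime_count_eventually:
  "\<exists>Q0::nat. \<forall>Q\<ge>Q0. real Q \<le> real (card {p. prime p \<and> Q \<le> p \<and> p \<le> 6*Q}) * ln (6 * real Q)"
proof -
  obtain x0 where x0: "\<And>x. x \<ge> x0 \<Longrightarrow> x + (sqrt (6*x) + 2) * ln (6*x) \<le> 2*x"
    using asym1 unfolding eventually_at_top_linorder by blast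
  define Q0 where "Q0 = max 1 (nat \<lceil>x0\<rceil>)"
  have "real Q \<le> real (card {p. prime p \<and> Q \<le> p \<and> p \<le> 6*Q}) * ln (6 * real Q)" if Q: "Q \<ge> Q0" for Q
  proof -
    define c where "c = card {p. prime p \<and> Q \<le> p \<and> p \<le> 6*Q}"
    have Q1: "Q \<ge> 1" using Q Q0_def by simp
    have Qx: "real Q \<ge> x0" using Q Q0_def by linarith
    define y where "y = sqrt (6 * real Q)"
    define r where "r = nat \<lfloor>y\<rfloor> + 1"
    have y0: "y \<ge> 0" unfolding y_def by simp
    have ry: "real r > y" "real r \<le> y + 1" unfolding r_def using y0 by linarith+
    have "6 * real Q = y * y" unfolding y_def by simp
    also have "\<dots> < real r * real r" using ry y0 by (intro mult_strict_mono) auto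
    finally have "6*Q < r*r" by (simp flip: of_nat_mult)
    from prime_count_bound[OF Q1 this]
    have "real (4^(3*Q)) \<le> real ((6*Q) * ((6*Q)^r * 4^Q) * (6*Q)^c)"
      unfolding c_def by (simp only: of_nat_le_iff)
    hence "(4::real)^(3*Q) \<le> (6*real Q) * ((6*real Q)^r * 4^Q) * (6*real Q)^c"
      by simp
    define L where "L = ln (6 * real Q)"
    have q6: "6 * real Q > 0" using Q1 by simp
    have "ln ((4::real)^(3*Q)) = real (3*Q) * ln 4" by (simp add: ln_realpow)
    moreover have "ln ((6*real Q) * ((6*real Q)^r * 4^Q) * (6*real Q)^c) = L + (real r * L + real Q * ln 4) + real c * L"
    proof -
      have p1: "(6*real Q)^r > 0" "(4::real)^Q > 0" "(6*real Q)^c > 0" using q6 by auto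
      have "ln ((6*real Q) * ((6*real Q)^r * 4^Q) * (6*real Q)^c) = ln ((6*real Q) * ((6*real Q)^r * 4^Q)) + ln ((6*real Q)^c)"
        using q6 p1 by (intro ln_mult_pos) auto
      also have "ln ((6*real Q) * ((6*real Q)^r * 4^Q)) = ln (6*real Q) + ln ((6*real Q)^r * 4^Q)"
        using q6 p1 by (intro ln_mult_pos) auto
      also have "ln ((6*real Q)^r * 4^Q) = ln ((6*real Q)^r) + ln ((4::real)^Q)"
        using p1 by (intro ln_mult_pos) auto
      also have "ln ((6*real Q)^r) = real r * L" unfolding L_def by (rule ln_realpow)
      also have "ln ((6*real Q)^c) = real c * L" unfolding L_def by (rule ln_realpow)
      also have "ln ((4::real)^Q) = real Q * ln 4" by (rule ln_realpow)
      finally show ?thesis unfolding L_def by simp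
    qed
    moreover have "ln ((4::real)^(3*Q)) \<le> ln ((6*real Q) * ((6*real Q)^r * 4^Q) * (6*real Q)^c)"
      using q6 \<open>(4::real)^(3*Q) \<le> _\<close> by (subst ln_le_cancel_iff) auto
    ultimately have "real (3*Q) * ln 4 \<le> L + (real r * L + real Q * ln 4) + real c * L" by simp
    hence A: "2 * real Q * ln 4 \<le> (real r + 1) * L + real c * L"
      by (simp add: algebra_simps)
    have L0: "L \<ge> 0" using Q1 unfolding L_def by simp
    have "(real r + 1) * L \<le> (y + 2) * L"
      using ry L0 by (intro mult_right_mono) auto
    moreover have "real Q + (y + 2) * L \<le> 2 * real Q"
      using x0[OF Qx] unfolding y_def L_def by simp
    moreover have "ln (4::real) \<ge> 1"
    proof -
      have "exp 1 \<le> (4::real)" using exp_le by simp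
      hence "ln (exp 1) \<le> ln (4::real)" by (subst ln_le_cancel_iff) auto
      thus ?thesis by simp
    qed
    hence "2 * real Q \<le> 2 * real Q * ln 4" using Q1 by simp
    ultimately have "real Q \<le> real c * L" using A by linarith
    thus ?thesis unfolding c_def L_def .
  qed
  thus ?thesis by blast
qed




lemma greedy_cover:
  fixes S :: "'a set" and good :: "'a \<Rightarrow> 'b \<Rightarrow> bool"
  assumes finS: "finite S" and Sne: "S \<noteq> {}"
    and half: "\<And>x. x \<in> X \<Longrightarrow> 2 * card {m\<in>S. \<not> good m x} \<le> card S"
    and finX: "finite X"
  shows "\<exists>M \<subseteq> S. (X \<noteq> {} \<longrightarrow> 2^(card M) \<le> 2 * card X) \<and> (\<forall>x\<in>X. \<exists>m\<in>M. good m x)"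
  using half finX
proof (induction "card X" arbitrary: X rule: less_induct)
  case less
  show ?case
  proof (cases "X = {}")
    case True then show ?thesis by auto
  next
    case Xne: False
    have gx: "card S \<le> 2 * card {m\<in>S. good m x}" if "x \<in> X" for x
    proof -
      have "card {m\<in>S. good m x} + card {m\<in>S. \<not> good m x} = card S"
        using finS by (subst card_Un_disjoint[symmetric]) (auto intro: arg_cong[where f=card])
      thus ?thesis using less.prems(1)[OF that] by linarith
    qed
    have "(\<Sum>m\<in>S. card {x\<in>X. good m x}) = (\<Sum>m\<in>S. \<Sum>x\<in>X. if good m x then 1 else 0)"
      using less.prems(2) by (intro sum.cong refl sum_ind_card[symmetric])
    also have "\<dots> = (\<Sum>x\<in>X. \<Sum>m\<in>S. if good m x then 1 else 0)" by (rule sum.swap)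
    also have "\<dots> = (\<Sum>x\<in>X. card {m\<in>S. good m x})"
      using finS by (intro sum.cong refl sum_ind_card)
    finally have sw: "(\<Sum>m\<in>S. card {x\<in>X. good m x}) = (\<Sum>x\<in>X. card {m\<in>S. good m x})" .
    have "\<exists>m\<in>S. card X \<le> 2 * card {x\<in>X. good m x}"
    proof (rule ccontr)
      assume "\<not> ?thesis"
      hence lt: "\<And>m. m \<in> S \<Longrightarrow> 2 * card {x\<in>X. good m x} < card X" by force
      have "(\<Sum>m\<in>S. 2 * card {x\<in>X. good m x}) < (\<Sum>m\<in>S. card X)"
        using finS Sne lt by (intro sum_strict_mono) auto
      also have "\<dots> = card S * card X" by simp
      also have "\<dots> = (\<Sum>x\<in>X. card S)" by simp
      also have "\<dots> \<le> (\<Sum>x\<in>X. 2 * card {m\<in>S. good m x})" by (intro sum_mono gx)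
      also have "\<dots> = (\<Sum>m\<in>S. 2 * card {x\<in>X. good m x})"
        using sw by (simp add: sum_distrib_left[symmetric])
      finally show False by simp
    qed
    then obtain m where m: "m \<in> S" "card X \<le> 2 * card {x\<in>X. good m x}" by blast
    define X' where "X' = {x\<in>X. \<not> good m x}"
    have finX': "finite X'" using less.prems(2) X'_def by simp
    have cX: "card {x\<in>X. good m x} + card X' = card X"
      unfolding X'_def using less.prems(2)
      by (subst card_Un_disjoint[symmetric]) (auto intro: arg_cong[where f=card])
    hence c2: "2 * card X' \<le> card X" using m by linarith
    have "card X > 0" using Xne less.prems(2) by (simp add: card_gt_0_iff)
    hence "card X' < card X" using c2 by linarith
    show ?thesis
    proof (cases "X' = {}")
      case True
      have "\<forall>x\<in>X. good m x" using True X'_def by auto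
      moreover have "2 ^ card {m} \<le> 2 * card X" using \<open>card X > 0\<close> by simp
      ultimately show ?thesis using m(1) by (intro exI[of _ "{m}"]) auto
    next
      case False
      obtain M' where M': "M' \<subseteq> S" "2^(card M') \<le> 2 * card X'" "\<forall>x\<in>X'. \<exists>m\<in>M'. good m x"
        using less.hyps[OF \<open>card X' < card X\<close>] less.prems(1) X'_def finX' False by auto
      have finM': "finite M'" using M'(1) finS finite_subset by blast
      have "card (insert m M') \<le> Suc (card M')" by (rule card_insert_le_m1) simp_all
      hence "(2::nat) ^ card (insert m M') \<le> 2 ^ Suc (card M')" by (intro power_increasing) auto
      also have "\<dots> \<le> 2 * card X" using M'(2) c2 by simp
      finally have "2 ^ card (insert m M') \<le> 2 * card X" .
      moreover have "\<forall>x\<in>X. \<exists>m'\<in>insert m M'. good m' x"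
        using M'(3) X'_def by auto
      ultimately show ?thesis using m(1) M'(1) by (intro exI[of _ "insert m M'"]) auto
    qed
  qed
qed




lemma few_prime_divisors:
  fixes T :: "int set" and d :: int and P :: real
  assumes finT: "finite T" and T: "\<And>p. p \<in> T \<Longrightarrow> prime p \<and> p dvd d \<and> P \<le> real_of_int p"
    and d0: "d \<noteq> 0" and P1: "P \<ge> 1"
  shows "P ^ card T \<le> real_of_int \<bar>d\<bar>"
proof -
  have "\<Prod>T dvd d" using finT T by (intro prod_primes_dvd) auto
  hence "\<bar>\<Prod>T\<bar> \<le> \<bar>d\<bar>" using d0 by (intro dvd_imp_le_int)
  moreover have "\<Prod>T > 0" using T prime_gt_0_int by (intro prod_pos) auto
  ultimately have "\<Prod>T \<le> \<bar>d\<bar>" by simp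
  hence "real_of_int (\<Prod>T) \<le> real_of_int \<bar>d\<bar>" by linarith
  moreover have "P ^ card T \<le> real_of_int (\<Prod>T)"
  proof -
    have "(\<Prod>p\<in>T. P) \<le> (\<Prod>p\<in>T. real_of_int p)"
      using T P1 by (intro prod_mono) auto
    thus ?thesis by simp
  qed
  ultimately show ?thesis by linarith
qed

lemma divisor_count_bound:
  fixes S :: "int set" and d :: int and P :: real and U :: nat
  assumes finS: "finite S" and S: "\<And>p. p \<in> S \<Longrightarrow> prime p \<and> P \<le> real_of_int p"
    and d0: "d \<noteq> 0" and P1: "P > 1" and dU: "\<bar>d\<bar> < 2 * int U"
  shows "real (card {m\<in>S. m dvd d}) \<le> ln (2 * real U) / ln P"
proof -
  define k where "k = card {m\<in>S. m dvd d}"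
  have "P ^ k \<le> real_of_int \<bar>d\<bar>" unfolding k_def
    using finS S d0 P1 by (intro few_prime_divisors) auto
  also have "\<dots> < 2 * real U" using dU by linarith
  finally have lt: "P ^ k < 2 * real U" .
  have U0: "U > 0" using dU by simp
  have "ln (P ^ k) < ln (2 * real U)" using lt P1 U0 by (subst ln_less_cancel_iff) auto
  hence "real k * ln P < ln (2 * real U)" by (simp add: ln_realpow)
  moreover have "ln P > 0" using P1 by simp
  ultimately have "real k \<le> ln (2 * real U) / ln P" by (simp add: field_simps)
  thus ?thesis unfolding k_def .
qed

definition cnt :: "nat set \<Rightarrow> nat set \<Rightarrow> nat \<Rightarrow> int \<Rightarrow> nat" where
  "cnt A B x m = card {(a, b). a \<in> A \<and> b \<in> B \<and> [int a + int b = int x] (mod m) \<and> a + b \<noteq> x}"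

lemma sum_cnt_bound:
  fixes A B :: "nat set" and x U :: nat and S :: "int set" and P :: real
  assumes finA: "finite A" and finB: "finite B" and AU: "A \<subseteq> {0..<U}" and BU: "B \<subseteq> {0..<U}"
    and xU: "x < U" and finS: "finite S" and S: "\<And>p. p \<in> S \<Longrightarrow> prime p \<and> P \<le> real_of_int p"
    and P1: "P > 1"
  shows "(\<Sum>m\<in>S. real (cnt A B x m)) \<le> real (card A * card B) * (ln (2 * real U) / ln P)"
proof -
  define R where "R m q = (m dvd (int (fst q) + int (snd q) - int x) \<and> fst q + snd q \<noteq> x)" for m q
  have finAB: "finite (A \<times> B)" using finA finB by simp
  have c: "cnt A B x m = card {q\<in>A \<times> B. R m q}" for m
    unfolding cnt_def R_def by (rule arg_cong[where f=card]) (auto simp: cong_iff_dvd_diff)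
  have "(\<Sum>m\<in>S. real (cnt A B x m)) = (\<Sum>m\<in>S. real (\<Sum>q\<in>A \<times> B. if R m q then 1 else 0))"
    unfolding c using finAB by (simp only: sum_ind_card)
  also have "\<dots> = (\<Sum>m\<in>S. \<Sum>q\<in>A \<times> B. real (if R m q then 1 else 0))"
    by (simp only: of_nat_sum)
  also have "\<dots> = (\<Sum>q\<in>A \<times> B. \<Sum>m\<in>S. real (if R m q then 1 else 0))" by (rule sum.swap)
  also have "\<dots> = (\<Sum>q\<in>A \<times> B. real (card {m\<in>S. R m q}))"
    using finS by (simp only: of_nat_sum[symmetric] sum_ind_card)
  also have "\<dots> \<le> (\<Sum>q\<in>A \<times> B. ln (2 * real U) / ln P)"
  proof (rule sum_mono)
    fix q assume q: "q \<in> A \<times> B"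
    show "real (card {m\<in>S. R m q}) \<le> ln (2 * real U) / ln P"
    proof (cases "fst q + snd q = x")
      case True
      hence E: "{m\<in>S. R m q} = {}" unfolding R_def by auto
      have "ln (2 * real U) / ln P \<ge> 0"
      proof -
        have "U \<ge> 1" using xU by simp
        thus ?thesis using P1 by (intro divide_nonneg_nonneg) auto
      qed
      thus ?thesis unfolding E by simp
    next
      case False
      define d where "d = int (fst q) + int (snd q) - int x"
      have "d \<noteq> 0" using False unfolding d_def by linarith
      moreover have "\<bar>d\<bar> < 2 * int U"
      proof -
        have "fst q < U" "snd q < U" using q AU BU by auto
        thus ?thesis using xU unfolding d_def by linarith
      qed
      ultimately have "real (card {m\<in>S. m dvd d}) \<le> ln (2 * real U) / ln P"
        using finS S P1 by (intro divisor_count_bound) auto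
      moreover have "{m\<in>S. R m q} = {m\<in>S. m dvd d}" unfolding R_def d_def using False by auto
      ultimately show ?thesis by simp
    qed
  qed
  also have "\<dots> = real (card A * card B) * (ln (2 * real U) / ln P)"
    by (simp add: card_cartesian_product)
  finally show ?thesis .
qed




lemma powr_15: "real n powr 1.5 = real n * sqrt (real n)"
proof (cases "n = 0")
  case False
  have "real n powr 1.5 = real n powr 1 * real n powr (1/2)"
    using powr_add[of "real n" 1 "1/2"] by simp
  also have "\<dots> = real n * sqrt (real n)" using False by (simp add: powr_half_sqrt)
  finally show ?thesis .
qed simp

lemma log_bound_from_pow:
  assumes "(2::nat) ^ k \<le> 2 * c" "c \<ge> 1"
  shows "real k \<le> 1 + log 2 (real c)"
proof -
  have "real ((2::nat) ^ k) \<le> real (2 * c)" using assms(1) by (simp only: of_nat_le_iff)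
  hence "(2::real) ^ k \<le> 2 * real c" by simp
  hence "log 2 ((2::real) ^ k) \<le> log 2 (2 * real c)" using assms(2) by (subst log_le_cancel_iff) auto
  moreover have "log 2 ((2::real) ^ k) = real k" by (simp add: log_nat_power)
  moreover have "log 2 (2 * real c) = 1 + log 2 (real c)" using assms(2) by (simp add: log_mult)
  ultimately show ?thesis by simp
qed




lemma large_case:
  fixes U n :: nat and A B X :: "nat set" and Q :: nat
  assumes U2: "U \<ge> 2" and n16: "n \<ge> 16"
    and AU: "A \<subseteq> {0..<U}" and BU: "B \<subseteq> {0..<U}" and XU: "X \<subseteq> {0..<U}"
    and cA: "card A = n" and cB: "card B = n" and Xne: "X \<noteq> {}"
    and Qdef: "Q = nat \<lceil>real n powr 1.5\<rceil>"
    and Qc: "real Q \<le> real (card {p. prime p \<and> Q \<le> p \<and> p \<le> 6*Q}) * ln (6 * real Q)"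
  shows "\<exists>M::int set. finite M \<and>
          real (card M) \<le> 1 + log 2 (real (card X)) \<and>
          M \<subseteq> {m. real n powr 1.5 \<le> real_of_int m \<and> real_of_int m < 8 * real n powr 1.5} \<and>
          (\<forall>x\<in>X. \<exists>m\<in>M. real (cnt A B x m) \<le> 8 / (ln 2)^2 * sqrt (real n) * (ln (real U)) ^ 3)"
proof -
  define P where "P = real n powr 1.5"
  have Peq: "P = real n * sqrt (real n)" unfolding P_def by (rule powr_15)
  have sq4: "sqrt (real n) \<ge> 4"
    by (rule real_le_rsqrt) (use n16 in simp)
  have Pn: "P \<ge> real n" using Peq sq4 by (simp add: mult_le_cancel_left1)
  have P64: "P \<ge> 64"
  proof -
    have "real n * sqrt (real n) \<ge> 16 * 4" using n16 sq4 by (intro mult_mono) auto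
    thus ?thesis using Peq by simp
  qed
  have QP: "real Q \<ge> P" "real Q < P + 1" unfolding Qdef P_def[symmetric] using P64 by linarith+
  have Q1: "Q \<ge> 1" using QP P64 by linarith
  define Sn where "Sn = {p. prime p \<and> Q \<le> p \<and> p \<le> 6*Q}"
  define c where "c = card Sn"
  have finSn: "finite Sn" unfolding Sn_def by auto
  have c0: "c > 0"
  proof (rule ccontr)
    assume "\<not> c > 0"
    hence "c = 0" by simp
    moreover have "real Q \<le> real c * ln (6 * real Q)" using Qc unfolding c_def Sn_def .
    ultimately show False using Q1 by simp
  qed
  define S where "S = int ` Sn"
  have finS: "finite S" unfolding S_def using finSn by simp
  have cS: "card S = c" unfolding S_def c_def by (rule card_image) (simp add: inj_on_def)
  have Sne: "S \<noteq> {}" using cS c0 by auto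
  have Sprop: "prime p \<and> P \<le> real_of_int p \<and> real_of_int p < 8 * P" if pS: "p \<in> S" for p
  proof -
    obtain q where q: "q \<in> Sn" "p = int q" using pS unfolding S_def by auto
    have "prime q" "Q \<le> q" "q \<le> 6*Q" using q(1) Sn_def by auto
    hence "real Q \<le> real q" "real q \<le> 6 * real Q" by simp_all
    moreover have "6 * real Q < 8 * P" using QP P64 by linarith
    ultimately show ?thesis using q \<open>prime q\<close> QP by simp
  qed
  define Lf where "Lf = ln (2 * real U) / ln P"
  define T0 where "T0 = 2 * real (n * n) * Lf / real c"
  have lnP: "ln P > 0" using P64 by simp
  have Lf0: "Lf > 0" unfolding Lf_def using lnP U2 by simp
  have T00: "T0 > 0" unfolding T0_def using Lf0 c0 n16 by simp
  have half: "2 * card {m\<in>S. \<not> real (cnt A B x m) \<le> T0} \<le> card S" if x: "x \<in> X" for x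
  proof -
    define Bad where "Bad = {m\<in>S. \<not> real (cnt A B x m) \<le> T0}"
    have finA: "finite A" "finite B" using AU BU finite_subset by blast+
    have xU: "x < U" using x XU by auto
    have sum: "(\<Sum>m\<in>S. real (cnt A B x m)) \<le> real (n * n) * Lf"
      using sum_cnt_bound[OF finA AU BU xU finS _ _] Sprop P64 cA cB unfolding Lf_def by simp
    have "real (card Bad) * T0 = (\<Sum>m\<in>Bad. T0)" by simp
    also have "\<dots> \<le> (\<Sum>m\<in>Bad. real (cnt A B x m))"
      by (rule sum_mono) (auto simp: Bad_def)
    also have "\<dots> \<le> (\<Sum>m\<in>S. real (cnt A B x m))"
      by (rule sum_mono2) (use finS in \<open>auto simp: Bad_def\<close>)
    also have "\<dots> \<le> real (n * n) * Lf" by (rule sum)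
    also have "\<dots> = T0 * real c / 2" unfolding T0_def using c0 by simp
    finally have "real (card Bad) * T0 \<le> (real c / 2) * T0" by (simp add: mult.commute)
    hence "real (card Bad) \<le> real c / 2" using T00 by simp
    hence "2 * card Bad \<le> c" by linarith
    thus ?thesis unfolding Bad_def cS .
  qed
  have finX: "finite X" using XU finite_subset by blast
  obtain M where M: "M \<subseteq> S" "X \<noteq> {} \<longrightarrow> 2^(card M) \<le> 2 * card X"
      "\<forall>x\<in>X. \<exists>m\<in>M. real (cnt A B x m) \<le> T0"
  proof -
    have "\<exists>M\<subseteq>S. (X \<noteq> {} \<longrightarrow> 2^(card M) \<le> 2 * card X) \<and> (\<forall>x\<in>X. \<exists>m\<in>M. real (cnt A B x m) \<le> T0)"
      by (rule greedy_cover[where good="\<lambda>m x. real (cnt A B x m) \<le> T0"]) (rule finS, rule Sne, rule half, assumption, rule finX)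
    thus ?thesis using that by blast
  qed
  have cX: "card X \<ge> 1" using Xne finX by (simp add: Suc_le_eq card_gt_0_iff)
  have cardM: "real (card M) \<le> 1 + log 2 (real (card X))"
    using M(2) Xne cX by (intro log_bound_from_pow) auto
  have finM: "finite M" using M(1) finS finite_subset by blast
  have Mrange: "M \<subseteq> {m. real n powr 1.5 \<le> real_of_int m \<and> real_of_int m < 8 * real n powr 1.5}"
    using M(1) Sprop unfolding P_def by auto
  have T0bound: "T0 \<le> 8 / (ln 2)^2 * sqrt (real n) * (ln (real U)) ^ 3"
  proof -
    have lnU: "ln (real U) \<ge> ln 2" using U2 by simp
    have ln20: "ln (2::real) > 0" by simp
    have l6Q: "ln (6 * real Q) \<le> 2 * ln P"
    proof -
      have "64 * P \<le> P * P" using P64 by (intro mult_right_mono) auto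
      hence "6 * real Q \<le> P * P" using QP P64 by linarith
      hence "ln (6 * real Q) \<le> ln (P * P)" using Q1 by (subst ln_le_cancel_iff) auto
      also have "\<dots> = 2 * ln P" using P64 by (simp add: ln_mult)
      finally show ?thesis .
    qed
    have l2U: "ln (2 * real U) \<le> 2 * ln (real U)"
    proof -
      have "2 * real U \<le> real U * real U" using U2 by (simp add: mult_right_mono)
      hence "ln (2 * real U) \<le> ln (real U * real U)" using U2 by (subst ln_le_cancel_iff) auto
      also have "\<dots> = 2 * ln (real U)" using U2 by (simp add: ln_mult)
      finally show ?thesis .
    qed
    have cl: "real Q \<le> real c * (2 * ln P)"
      using Qc l6Q c0 unfolding c_def Sn_def
      by (meson mult_left_mono of_nat_0_le_iff order_trans)
    have den: "ln P * real c \<ge> real Q / 2" using cl by (simp add: algebra_simps)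
    have Qpos: "real Q > 0" using Q1 by simp
    have "T0 = 2 * real (n * n) * ln (2 * real U) / (ln P * real c)"
      unfolding T0_def Lf_def by (simp add: field_simps)
    also have "\<dots> \<le> 2 * real (n * n) * ln (2 * real U) / (real Q / 2)"
      using den Qpos U2 by (intro divide_left_mono) auto
    also have "\<dots> = 4 * (real (n*n) / real Q) * ln (2 * real U)" by (simp add: field_simps)
    also have "\<dots> \<le> 4 * sqrt (real n) * (2 * ln (real U))"
    proof (rule mult_mono)
      have "real (n*n) = sqrt (real n) * P" using Peq by (simp add: algebra_simps)
      also have "\<dots> \<le> sqrt (real n) * real Q" using QP by (intro mult_left_mono) auto
      finally have "real (n*n) / real Q \<le> sqrt (real n)" using Qpos by (simp add: field_simps)
      thus "4 * (real (n*n) / real Q) \<le> 4 * sqrt (real n)" by simp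
      show "ln (2 * real U) \<le> 2 * ln (real U)" by (rule l2U)
    qed (use U2 in auto)
    also have "\<dots> = 8 * sqrt (real n) * ln (real U)" by simp
    also have "\<dots> \<le> 8 / (ln 2)^2 * sqrt (real n) * (ln (real U)) ^ 3"
    proof -
      have "(ln 2)^2 \<le> (ln (real U))^2" by (rule power_mono) (use lnU ln20 in linarith)+
      moreover have "0 \<le> ln (real U)" using lnU ln20 by linarith
      ultimately have "(ln 2)^2 * ln (real U) \<le> (ln (real U))^2 * ln (real U)"
        by (rule mult_right_mono)
      hence "ln (real U) \<le> (ln (real U))^3 / (ln 2)^2" using ln20
        by (simp add: field_simps power3_eq_cube power2_eq_square)
      hence "8 * sqrt (real n) * ln (real U) \<le> 8 * sqrt (real n) * ((ln (real U))^3 / (ln 2)^2)"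
        by (intro mult_left_mono) auto
      thus ?thesis by (simp add: field_simps)
    qed
    finally show ?thesis .
  qed
  have cov: "\<forall>x\<in>X. \<exists>m\<in>M. real (cnt A B x m) \<le> 8 / (ln 2)^2 * sqrt (real n) * (ln (real U)) ^ 3"
  proof
    fix x assume "x \<in> X"
    then obtain m where "m \<in> M" "real (cnt A B x m) \<le> T0" using M(3) by blast
    thus "\<exists>m\<in>M. real (cnt A B x m) \<le> 8 / (ln 2)^2 * sqrt (real n) * (ln (real U)) ^ 3"
      using T0bound by (meson order_trans)
  qed
  show ?thesis
    using finM cardM Mrange cov by blast
qed




theorem mainTheorem8:
  shows "\<exists>K::real. K > 0 \<and>
    (\<forall>(U::nat) (n::nat) (A::nat set) (B::nat set) (X::nat set).
       U \<ge> 2 \<longrightarrow> n \<ge> 2 \<longrightarrow>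
       A \<subseteq> {0..<U} \<longrightarrow> B \<subseteq> {0..<U} \<longrightarrow> X \<subseteq> {0..<U} \<longrightarrow>
       card A = n \<longrightarrow> card B = n \<longrightarrow> X \<noteq> {} \<longrightarrow>
       (\<exists>M::int set. finite M \<and>
          real (card M) \<le> 1 + log 2 (real (card X)) \<and>
          M \<subseteq> {m. real n powr 1.5 \<le> real_of_int m \<and> real_of_int m < 8 * real n powr 1.5} \<and>
          (\<forall>x\<in>X. \<exists>m\<in>M.
             real (card {(a, b). a \<in> A \<and> b \<in> B \<and>
                      [int a + int b = int x] (mod m) \<and> a + b \<noteq> x})
             \<le> K * sqrt (real n) * (ln (real U)) ^ 3)))"
proof -
  obtain Q0 :: nat where Q0: "\<And>Q. Q \<ge> Q0 \<Longrightarrow>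
      real Q \<le> real (card {p. prime p \<and> Q \<le> p \<and> p \<le> 6*Q}) * ln (6 * real Q)"
    using prime_count_eventually by blast
  define n0 where "n0 = max Q0 16"
  define K where "K = max (8 / (ln 2)^2) (real (n0*n0) / (ln 2)^3)"
  have ln20: "ln (2::real) > 0" by simp
  have K0: "K > 0" unfolding K_def using ln20 by (simp add: less_max_iff_disj)
  show ?thesis
  proof (intro exI[of _ K] conjI allI impI)
    show "K > 0" by (rule K0)
    fix U n :: nat and A B X :: "nat set"
    assume U2: "U \<ge> 2" and n2: "n \<ge> 2" and AU: "A \<subseteq> {0..<U}" and BU: "B \<subseteq> {0..<U}"
      and XU: "X \<subseteq> {0..<U}" and cA: "card A = n" and cB: "card B = n" and Xne: "X \<noteq> {}"
    have lnU: "ln (real U) \<ge> ln 2" using U2 by simp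
    have Pn: "real n powr 1.5 \<ge> real n"
    proof -
      have "sqrt (real n) \<ge> 1" using n2 by simp
      hence "real n * 1 \<le> real n * sqrt (real n)" by (intro mult_left_mono) auto
      thus ?thesis using powr_15[of n] by simp
    qed
    have finX: "finite X" using XU finite_subset by blast
    have cX: "card X \<ge> 1" using Xne finX by (simp add: Suc_le_eq card_gt_0_iff)
    show "\<exists>M::int set. finite M \<and>
          real (card M) \<le> 1 + log 2 (real (card X)) \<and>
          M \<subseteq> {m. real n powr 1.5 \<le> real_of_int m \<and> real_of_int m < 8 * real n powr 1.5} \<and>
          (\<forall>x\<in>X. \<exists>m\<in>M.
             real (card {(a, b). a \<in> A \<and> b \<in> B \<and>
                      [int a + int b = int x] (mod m) \<and> a + b \<noteq> x})
             \<le> K * sqrt (real n) * (ln (real U)) ^ 3)"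
    proof (cases "n \<ge> n0")
      case True
      define Q where "Q = nat \<lceil>real n powr 1.5\<rceil>"
      have "real Q \<ge> real n" unfolding Q_def using Pn by linarith
      hence "Q \<ge> Q0" using True n0_def by simp
      from large_case[OF U2 _ AU BU XU cA cB Xne Q_def Q0[OF this]]
      obtain M :: "int set" where M: "finite M" "real (card M) \<le> 1 + log 2 (real (card X))"
          "M \<subseteq> {m. real n powr 1.5 \<le> real_of_int m \<and> real_of_int m < 8 * real n powr 1.5}"
          "\<forall>x\<in>X. \<exists>m\<in>M. real (cnt A B x m) \<le> 8 / (ln 2)^2 * sqrt (real n) * (ln (real U)) ^ 3"
        using True n0_def by auto
      have "8 / (ln 2)^2 * sqrt (real n) * (ln (real U)) ^ 3 \<le> K * sqrt (real n) * (ln (real U)) ^ 3"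
      proof (rule mult_right_mono)
        show "8 / (ln 2)^2 * sqrt (real n) \<le> K * sqrt (real n)"
          by (rule mult_right_mono) (auto simp: K_def)
        have "0 \<le> ln (real U)" using lnU ln20 by linarith
        thus "0 \<le> (ln (real U)) ^ 3" by simp
      qed
      hence "\<forall>x\<in>X. \<exists>m\<in>M. real (cnt A B x m) \<le> K * sqrt (real n) * (ln (real U)) ^ 3"
        using M(4) by (meson order_trans)
      thus ?thesis using M(1-3) unfolding cnt_def by blast
    next
      case False
      define P where "P = real n powr 1.5"
      define M where "M = {\<lceil>P\<rceil>}"
      have P2: "P \<ge> 2" using Pn n2 P_def by simp
      have "real (card M) \<le> 1 + log 2 (real (card X))"
      proof -
        have "log 2 (real (card X)) \<ge> 0" using cX by simp
        thus ?thesis unfolding M_def by simp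
      qed
      moreover have "M \<subseteq> {m. real n powr 1.5 \<le> real_of_int m \<and> real_of_int m < 8 * real n powr 1.5}"
      proof -
        have "real_of_int \<lceil>P\<rceil> < P + 1" by linarith
        hence "real_of_int \<lceil>P\<rceil> < 8 * P" using P2 by linarith
        moreover have "P \<le> real_of_int \<lceil>P\<rceil>" by linarith
        ultimately show ?thesis unfolding M_def P_def[symmetric] by auto
      qed
      moreover have "\<forall>x\<in>X. \<exists>m\<in>M.
             real (card {(a, b). a \<in> A \<and> b \<in> B \<and>
                      [int a + int b = int x] (mod m) \<and> a + b \<noteq> x})
             \<le> K * sqrt (real n) * (ln (real U)) ^ 3"
      proof (intro ballI bexI)
        fix x assume "x \<in> X"
        have finAB: "finite (A \<times> B)" using AU BU finite_subset by blast
        have "card {(a, b). a \<in> A \<and> b \<in> B \<and> [int a + int b = int x] (mod \<lceil>P\<rceil>) \<and> a + b \<noteq> x}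
              \<le> card (A \<times> B)"
          by (rule card_mono[OF finAB]) auto
        also have "\<dots> = n * n" using cA cB by (simp add: card_cartesian_product)
        also have "\<dots> \<le> n0 * n0" using False by (intro mult_le_mono) auto
        finally have c1: "real (card {(a, b). a \<in> A \<and> b \<in> B \<and> [int a + int b = int x] (mod \<lceil>P\<rceil>) \<and> a + b \<noteq> x})
              \<le> real (n0 * n0)" by (simp only: of_nat_le_iff)
        have "real (n0 * n0) = real (n0 * n0) / (ln 2)^3 * (ln 2)^3" using ln20 by simp
        also have "\<dots> \<le> K * (ln 2)^3"
          by (rule mult_right_mono) (use ln20 in \<open>auto simp: K_def\<close>)
        also have "\<dots> \<le> K * sqrt (real n) * (ln (real U)) ^ 3"
        proof -
          have "(ln 2)^3 \<le> (ln (real U))^3" by (rule power_mono) (use lnU ln20 in linarith)+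
          moreover have "1 \<le> sqrt (real n)" using n2 by simp
          ultimately have "1 * (ln 2)^3 \<le> sqrt (real n) * (ln (real U))^3"
            by (intro mult_mono) (use ln20 in auto)
          hence "K * (ln 2)^3 \<le> K * (sqrt (real n) * (ln (real U))^3)"
            using K0 by (intro mult_left_mono) auto
          thus ?thesis by (simp add: mult.assoc)
        qed
        finally show "real (card {(a, b). a \<in> A \<and> b \<in> B \<and> [int a + int b = int x] (mod \<lceil>P\<rceil>) \<and> a + b \<noteq> x})
             \<le> K * sqrt (real n) * (ln (real U)) ^ 3" using c1 by linarith
        show "\<lceil>P\<rceil> \<in> M" unfolding M_def by simp
      qed
      ultimately show ?thesis using M_def by (intro exI[of _ M]) auto
    qed
  qed
qed


end
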